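(* Let $k$ be odd. Let $F$ be the set of the $2n$ frame positions, partitioned into the $n$ pairs $\{p,p'\}$ where $p,p'\in F$ have the same set $B(p)=B(p')=\{s\}$ and $\{p_s,p'_s\}=\{0,k-1\}$. Then for every combination $g$: $g(F)=F$; $g$ maps each pair onto a pair (so the partition of the $2n$ frame cubies into pairs is preserved, and its index $B_1$ among the $(2n)!/(2^n n!)$ partitions of $2n$ objects into pairs is invariant); and $\operatorname{sgn}(g|_F)\cdot\operatorname{sgn}(\hat g)=1$, where $\hat g$ is the permutation of the set of $n$ pairs induced by $g$ (so $B_2=\operatorname{sgn}(\sigma_c)\operatorname{sgn}(\sigma_p)$ is invariant).
   Context: Fix integers $k\ge2$, $n\ge3$, $M=\{0,\dots,k-1\}$. Positions are $p\in M^n$; $B(p)=\{i:p_i\in\{0,k-1\}\}$. For distinct $i,j$, $\psi_{i,j}:M^n\to M^n$ is $(\psi_{i,j}p)_i=k-1-p_j$, $(\psi_{i,j}p)_j=p_i$, other coordinates unchanged. A move is given by distinct $i,j$ and constants $c_l\in M$ ($l\notin\{i,j\}$): it sends each position $p$ with $p_l=c_l$ ($l\notin\{i,j\}$) to $\psi_{i,j}(p)$ and fixes the other positions; a combination is a finite sequence of moves, regarded as the composite permutation of positions. For odd $k$, the frame positions are those with exactly one coordinate in $\{0,k-1\}$ and all other coordinates equal to $(k-1)/2$. For two states of the frame, $\sigma_c$ denotes the permutation of frame cubies and $\sigma_p$ the permutation of pairs relating them. *)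

theory Defs
  imports "HOL-Combinatorics.Permutations"
begin

text \<open>Positions in M^n are encoded as functions nat => nat, with p i < k for i < n
  and p i = 0 for i >= n (coordinates 0..n-1).\<close>

definition positions :: "nat \<Rightarrow> nat \<Rightarrow> (nat \<Rightarrow> nat) set" where
  "positions k n = {p. (\<forall>i<n. p i < k) \<and> (\<forall>i. n \<le> i \<longrightarrow> p i = 0)}"

definition Bset :: "nat \<Rightarrow> nat \<Rightarrow> (nat \<Rightarrow> nat) \<Rightarrow> nat set" where
  "Bset k n p = {i. i < n \<and> (p i = 0 \<or> p i = k - 1)}"

definition psi :: "nat \<Rightarrow> nat \<Rightarrow> nat \<Rightarrow> (nat \<Rightarrow> nat) \<Rightarrow> (nat \<Rightarrow> nat)" where
  "psi k i j p = p(i := k - 1 - p j, j := p i)"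

definition move :: "nat \<Rightarrow> nat \<Rightarrow> nat \<Rightarrow> nat \<Rightarrow> (nat \<Rightarrow> nat) \<Rightarrow> (nat \<Rightarrow> nat) \<Rightarrow> (nat \<Rightarrow> nat)" where
  "move k n i j c p =
     (if \<forall>l<n. l \<noteq> i \<and> l \<noteq> j \<longrightarrow> p l = c l then psi k i j p else p)"

definition valid_move :: "nat \<Rightarrow> nat \<Rightarrow> nat \<Rightarrow> nat \<Rightarrow> (nat \<Rightarrow> nat) \<Rightarrow> bool" where
  "valid_move k n i j c \<longleftrightarrow> i < n \<and> j < n \<and> i \<noteq> j \<and> (\<forall>l<n. l \<noteq> i \<and> l \<noteq> j \<longrightarrow> c l < k)"

inductive combination :: "nat \<Rightarrow> nat \<Rightarrow> ((nat \<Rightarrow> nat) \<Rightarrow> (nat \<Rightarrow> nat)) \<Rightarrow> bool"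
  for k n where
  comb_id: "combination k n id"
| comb_step: "combination k n g \<Longrightarrow> valid_move k n i j c \<Longrightarrow> combination k n (move k n i j c \<circ> g)"

definition frame :: "nat \<Rightarrow> nat \<Rightarrow> (nat \<Rightarrow> nat) set" where
  "frame k n = {p \<in> positions k n. card (Bset k n p) = 1 \<and>
      (\<forall>i<n. i \<notin> Bset k n p \<longrightarrow> p i = (k - 1) div 2)}"

definition frame_pairs :: "nat \<Rightarrow> nat \<Rightarrow> (nat \<Rightarrow> nat) set set" where
  "frame_pairs k n = {{p, q} | p q. p \<in> frame k n \<and> q \<in> frame k n \<and>
      (\<exists>s. Bset k n p = {s} \<and> Bset k n q = {s} \<and> {p s, q s} = {0, k - 1})}"

definition restr_frame :: "nat \<Rightarrow> nat \<Rightarrow> ((nat \<Rightarrow> nat) \<Rightarrow> (nat \<Rightarrow> nat)) \<Rightarrow> (nat \<Rightarrow> nat) \<Rightarrow> (nat \<Rightarrow> nat)" where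
  "restr_frame k n g = (\<lambda>p. if p \<in> frame k n then g p else p)"

definition pair_perm :: "nat \<Rightarrow> nat \<Rightarrow> ((nat \<Rightarrow> nat) \<Rightarrow> (nat \<Rightarrow> nat)) \<Rightarrow> (nat \<Rightarrow> nat) set \<Rightarrow> (nat \<Rightarrow> nat) set" where
  "pair_perm k n g = (\<lambda>P. if P \<in> frame_pairs k n then g ` P else P)"

end

theory Submission
  imports Defs
begin

definition fr :: "nat \<Rightarrow> nat \<Rightarrow> nat \<Rightarrow> nat \<Rightarrow> (nat \<Rightarrow> nat)" where
  "fr k n s e = (\<lambda>l. if l = s then e else if l < n then (k - 1) div 2 else 0)"

definition Qp :: "nat \<Rightarrow> nat \<Rightarrow> nat \<Rightarrow> (nat \<Rightarrow> nat) set" where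
  "Qp k n s = {fr k n s 0, fr k n s (k - 1)}"

lemma mid_facts:
  assumes "k \<ge> 2" "odd k"
  shows "(k - 1) div 2 \<noteq> 0" "(k - 1) div 2 \<noteq> k - 1" "k - 1 - (k - 1) div 2 = (k - 1) div 2"
    "(k - 1) div 2 < k" "(0::nat) \<noteq> k - 1"
  using assms by (auto elim!: oddE)

lemma Bset_fr:
  assumes "k \<ge> 2" "odd k" "s < n" "e \<in> {0, k - 1}"
  shows "Bset k n (fr k n s e) = {s}"
  using assms mid_facts[OF assms(1,2)] by (auto simp: Bset_def fr_def)

lemma fr_in_frame:
  assumes "k \<ge> 2" "odd k" "s < n" "e \<in> {0, k - 1}"
  shows "fr k n s e \<in> frame k n"
  using assms mid_facts[OF assms(1,2)] Bset_fr[OF assms]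
  by (auto simp: frame_def positions_def fr_def)

lemma frame_char:
  assumes "k \<ge> 2" "odd k"
  shows "frame k n = (\<lambda>(s, e). fr k n s e) ` ({..<n} \<times> {0, k - 1})"
proof
  show "(\<lambda>(s, e). fr k n s e) ` ({..<n} \<times> {0, k - 1}) \<subseteq> frame k n"
    using fr_in_frame[OF assms] by auto
next
  show "frame k n \<subseteq> (\<lambda>(s, e). fr k n s e) ` ({..<n} \<times> {0, k - 1})"
  proof
    fix p assume p: "p \<in> frame k n"
    then obtain s where s: "Bset k n p = {s}" unfolding frame_def by (auto simp: card_1_singleton_iff)
    have sn: "s < n" and ps: "p s \<in> {0, k - 1}" using s unfolding Bset_def by auto
    have "p = fr k n s (p s)"
    proof
      fix l
      show "p l = fr k n s (p s) l"
        using p s unfolding frame_def positions_def fr_def by auto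
    qed
    then show "p \<in> (\<lambda>(s, e). fr k n s e) ` ({..<n} \<times> {0, k - 1})"
      using sn ps by force
  qed
qed

lemma fr_inj:
  assumes "k \<ge> 2" "odd k" "s < n" "e \<in> {0, k - 1}" "s' < n" "e' \<in> {0, k - 1}"
    and "fr k n s e = fr k n s' e'"
  shows "s = s' \<and> e = e'"
proof -
  have "fr k n s e s = fr k n s' e' s" using assms(7) by simp
  then have "s = s'" using assms mid_facts[OF assms(1,2)] by (auto simp: fr_def split: if_splits)
  then show ?thesis using fun_cong[OF assms(7), of s] by (simp add: fr_def)
qed

lemma frame_pairs_char:
  assumes "k \<ge> 2" "odd k"
  shows "frame_pairs k n = Qp k n ` {..<n}"
proof
  show "frame_pairs k n \<subseteq> Qp k n ` {..<n}"
  proof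
    fix P assume "P \<in> frame_pairs k n"
    then obtain p q s where P: "P = {p, q}" and pq: "p \<in> frame k n" "q \<in> frame k n"
      and B: "Bset k n p = {s}" "Bset k n q = {s}" "{p s, q s} = {0, k - 1}"
      unfolding frame_pairs_def by blast
    obtain s1 e1 where p: "p = fr k n s1 e1" "s1 < n" "e1 \<in> {0, k - 1}"
      using pq(1) frame_char[OF assms] by auto
    obtain s2 e2 where q: "q = fr k n s2 e2" "s2 < n" "e2 \<in> {0, k - 1}"
      using pq(2) frame_char[OF assms] by auto
    have "s1 = s" using B(1) Bset_fr[OF assms p(2,3)] p(1) by simp
    moreover have "s2 = s" using B(2) Bset_fr[OF assms q(2,3)] q(1) by simp
    ultimately have "{e1, e2} = {0, k - 1}" using B(3) p q by (simp add: fr_def)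
    then have "P = Qp k n s" using P p q \<open>s1 = s\<close> \<open>s2 = s\<close> unfolding Qp_def
      by (auto simp: doubleton_eq_iff)
    then show "P \<in> Qp k n ` {..<n}" using p(2) \<open>s1 = s\<close> by auto
  qed
next
  show "Qp k n ` {..<n} \<subseteq> frame_pairs k n"
  proof
    fix P assume "P \<in> Qp k n ` {..<n}"
    then obtain s where s: "s < n" "P = Qp k n s" by auto
    have "fr k n s 0 \<in> frame k n" "fr k n s (k - 1) \<in> frame k n"
      using fr_in_frame[OF assms s(1)] by auto
    moreover have "Bset k n (fr k n s 0) = {s}" "Bset k n (fr k n s (k - 1)) = {s}"
      using Bset_fr[OF assms s(1)] by auto
    moreover have "{fr k n s 0 s, fr k n s (k - 1) s} = {0, k - 1}" by (simp add: fr_def)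
    ultimately show "P \<in> frame_pairs k n" unfolding frame_pairs_def s(2) Qp_def by blast
  qed
qed


lemma move_fr:
  assumes k: "k \<ge> 2" "odd k" and vm: "valid_move k n i j c" and s: "s < n" "e \<in> {0, k - 1}"
  shows "move k n i j c (fr k n s e) =
    (if (\<forall>l<n. l \<noteq> i \<and> l \<noteq> j \<longrightarrow> c l = (k - 1) div 2)
     then (if s = i then fr k n j e else if s = j then fr k n i (k - 1 - e) else fr k n s e)
     else fr k n s e)"
proof -
  define m where "m = (k - 1) div 2"
  have m: "k - 1 - m = m" using mid_facts[OF k] m_def by simp
  have frm: "fr k n = (\<lambda>s e l. if l = s then e else if l < n then m else 0)"
    unfolding fr_def m_def by (intro ext) simp
  have ij: "i < n" "j < n" "i \<noteq> j" using vm unfolding valid_move_def by auto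
  have psi_other: "psi k i j (fr k n s e) = fr k n s e" if "s \<noteq> i" "s \<noteq> j"
  proof
    fix l show "psi k i j (fr k n s e) l = fr k n s e l"
      using that ij m unfolding psi_def frm by simp
  qed
  show ?thesis
  proof (cases "\<forall>l<n. l \<noteq> i \<and> l \<noteq> j \<longrightarrow> c l = (k - 1) div 2")
    case True
    note A = True
    show ?thesis
    proof (cases "s = i \<or> s = j")
      case True
      then have cond: "\<forall>l<n. l \<noteq> i \<and> l \<noteq> j \<longrightarrow> fr k n s e l = c l"
      proof (intro allI impI)
        fix l assume "l < n" "l \<noteq> i \<and> l \<noteq> j"
        then show "fr k n s e l = c l" using A True unfolding frm m_def by auto
      qed
      have mv: "move k n i j c (fr k n s e) = psi k i j (fr k n s e)"
        unfolding move_def using cond by simp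
      show ?thesis
      proof (cases "s = i")
        case True
        have "psi k i j (fr k n s e) = fr k n j e"
        proof
          fix l show "psi k i j (fr k n s e) l = fr k n j e l"
            using True ij m s unfolding psi_def frm by simp
        qed
        then show ?thesis using mv A True by simp
      next
        case False
        then have sj: "s = j" using \<open>s = i \<or> s = j\<close> by simp
        have "psi k i j (fr k n s e) = fr k n i (k - 1 - e)"
        proof
          fix l show "psi k i j (fr k n s e) l = fr k n i (k - 1 - e) l"
            using sj ij m s unfolding psi_def frm by simp
        qed
        then show ?thesis using mv A False sj by simp
      qed
    next
      case False
      then have "move k n i j c (fr k n s e) = fr k n s e"
        using psi_other unfolding move_def by simp
      then show ?thesis using False by simp
    qed
  next
    case False
    then obtain l0 where l0: "l0 < n" "l0 \<noteq> i" "l0 \<noteq> j" "c l0 \<noteq> (k - 1) div 2" by auto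
    show ?thesis
    proof (cases "s = i \<or> s = j")
      case True
      have "\<not> (\<forall>l<n. l \<noteq> i \<and> l \<noteq> j \<longrightarrow> fr k n s e l = c l)"
      proof
        assume "\<forall>l<n. l \<noteq> i \<and> l \<noteq> j \<longrightarrow> fr k n s e l = c l"
        then have "fr k n s e l0 = c l0" using l0 by blast
        then show False using l0 True unfolding frm m_def by auto
      qed
      then have "move k n i j c (fr k n s e) = fr k n s e"
        unfolding move_def by (simp only: if_False)
      then show ?thesis unfolding if_not_P[OF False] .
    next
      case F2: False
      then have "move k n i j c (fr k n s e) = fr k n s e"
        using psi_other unfolding move_def by simp
      then show ?thesis unfolding if_not_P[OF False] .
    qed
  qed
qed


lemma fr_eq_iff:
  assumes "k \<ge> 2" "odd k" "s < n" "e \<in> {0, k - 1}" "s' < n" "e' \<in> {0, k - 1}"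
  shows "fr k n s e = fr k n s' e' \<longleftrightarrow> s = s' \<and> e = e'"
  using fr_inj[OF assms] by auto

lemma Qp_eq_iff:
  assumes "k \<ge> 2" "odd k" "s < n" "s' < n"
  shows "Qp k n s = Qp k n s' \<longleftrightarrow> s = s'"
proof
  assume "Qp k n s = Qp k n s'"
  then have "fr k n s 0 \<in> Qp k n s'" unfolding Qp_def by auto
  then show "s = s'" unfolding Qp_def using fr_eq_iff[OF assms(1,2,3) _ assms(4)] by auto
qed simp

lemma move_restr:
  assumes k: "k \<ge> 2" "odd k" and vm: "valid_move k n i j c"
    and A: "\<forall>l<n. l \<noteq> i \<and> l \<noteq> j \<longrightarrow> c l = (k - 1) div 2"
  shows "restr_frame k n (move k n i j c) =
    transpose (fr k n i 0) (fr k n j 0) \<circ> transpose (fr k n j 0) (fr k n i (k - 1))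
      \<circ> transpose (fr k n i (k - 1)) (fr k n j (k - 1))"
    (is "_ = ?T")
proof
  fix p
  have ij: "i < n" "j < n" "i \<noteq> j" using vm unfolding valid_move_def by auto
  have z: "(0::nat) \<noteq> k - 1" using mid_facts[OF k] by simp
  note eqs = fr_eq_iff[OF k]
  show "restr_frame k n (move k n i j c) p = ?T p"
  proof (cases "p \<in> frame k n")
    case True
    then obtain s e where p: "p = fr k n s e" "s < n" "e \<in> {0, k - 1}"
      using frame_char[OF k] by auto
    have mv: "move k n i j c p = (if s = i then fr k n j e else if s = j then fr k n i (k - 1 - e) else fr k n s e)"
      using move_fr[OF k vm p(2,3)] A p(1) by simp
    show ?thesis
      using p(2,3) ij z unfolding restr_frame_def if_P[OF True] mv
      by (auto simp: p(1) transpose_def eqs)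
  next
    case False
    have "fr k n i 0 \<in> frame k n" "fr k n j 0 \<in> frame k n"
      "fr k n i (k - 1) \<in> frame k n" "fr k n j (k - 1) \<in> frame k n"
      using fr_in_frame[OF k] ij by auto
    then have "p \<noteq> fr k n i 0" "p \<noteq> fr k n j 0" "p \<noteq> fr k n i (k - 1)" "p \<noteq> fr k n j (k - 1)"
      using False by auto
    then show ?thesis unfolding restr_frame_def if_not_P[OF False] by (simp add: transpose_def)
  qed
qed


lemma move_restr_id:
  assumes k: "k \<ge> 2" "odd k" and vm: "valid_move k n i j c"
    and A: "\<not> (\<forall>l<n. l \<noteq> i \<and> l \<noteq> j \<longrightarrow> c l = (k - 1) div 2)"
  shows "restr_frame k n (move k n i j c) = id"
proof
  fix p
  show "restr_frame k n (move k n i j c) p = id p"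
  proof (cases "p \<in> frame k n")
    case True
    then obtain s e where p: "p = fr k n s e" "s < n" "e \<in> {0, k - 1}"
      using frame_char[OF k] by auto
    have "move k n i j c p = p" using move_fr[OF k vm p(2,3)] unfolding if_not_P[OF A] p(1) .
    then show ?thesis using True unfolding restr_frame_def by simp
  qed (simp add: restr_frame_def)
qed

lemma move_Qp:
  assumes k: "k \<ge> 2" "odd k" and vm: "valid_move k n i j c" and s: "s < n"
  shows "move k n i j c ` Qp k n s =
    (if (\<forall>l<n. l \<noteq> i \<and> l \<noteq> j \<longrightarrow> c l = (k - 1) div 2)
     then (if s = i then Qp k n j else if s = j then Qp k n i else Qp k n s)
     else Qp k n s)"
proof -
  have z: "k - 1 - (k - 1) = (0::nat)" "k - 1 - 0 = k - 1" by simp_all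
  show ?thesis unfolding Qp_def using move_fr[OF k vm s, of 0] move_fr[OF k vm s, of "k - 1"] z
    by (auto simp del: diff_self_eq_0)
qed

lemma move_pair_perm:
  assumes k: "k \<ge> 2" "odd k" and vm: "valid_move k n i j c"
  shows "pair_perm k n (move k n i j c) =
    (if (\<forall>l<n. l \<noteq> i \<and> l \<noteq> j \<longrightarrow> c l = (k - 1) div 2)
     then transpose (Qp k n i) (Qp k n j) else id)"
proof
  fix P
  have ij: "i < n" "j < n" "i \<noteq> j" using vm unfolding valid_move_def by auto
  note qe = Qp_eq_iff[OF k]
  show "pair_perm k n (move k n i j c) P = (if (\<forall>l<n. l \<noteq> i \<and> l \<noteq> j \<longrightarrow> c l = (k - 1) div 2)
     then transpose (Qp k n i) (Qp k n j) else id) P"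
  proof (cases "P \<in> frame_pairs k n")
    case True
    then obtain s where s: "s < n" "P = Qp k n s" using frame_pairs_char[OF k] by auto
    show ?thesis unfolding pair_perm_def if_P[OF True] s(2) move_Qp[OF k vm s(1)]
      using s(1) ij frame_pairs_char[OF k] by (auto simp: transpose_def qe)
  next
    case False
    then have "P \<noteq> Qp k n i" "P \<noteq> Qp k n j" using frame_pairs_char[OF k] ij by auto
    then show ?thesis unfolding pair_perm_def if_not_P[OF False] by (simp add: transpose_def)
  qed
qed


lemma finite_frame: "k \<ge> 2 \<Longrightarrow> odd k \<Longrightarrow> finite (frame k n)"
  by (subst frame_char) (auto intro: finite_imageI)

lemma finite_frame_pairs: "k \<ge> 2 \<Longrightarrow> odd k \<Longrightarrow> finite (frame_pairs k n)"
  by (subst frame_pairs_char) (auto intro: finite_imageI)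

lemma move_inv:
  assumes k: "k \<ge> 2" "odd k" and vm: "valid_move k n i j c"
  shows "restr_frame k n (move k n i j c) permutes frame k n
    \<and> pair_perm k n (move k n i j c) permutes frame_pairs k n
    \<and> sign (restr_frame k n (move k n i j c)) * sign (pair_perm k n (move k n i j c)) = 1"
proof -
  have ij: "i < n" "j < n" "i \<noteq> j" using vm unfolding valid_move_def by auto
  have z: "(0::nat) \<noteq> k - 1" using mid_facts[OF k] by simp
  have inF: "fr k n i 0 \<in> frame k n" "fr k n j 0 \<in> frame k n"
      "fr k n i (k - 1) \<in> frame k n" "fr k n j (k - 1) \<in> frame k n"
      using fr_in_frame[OF k] ij by auto
  have inP: "Qp k n i \<in> frame_pairs k n" "Qp k n j \<in> frame_pairs k n"
    using frame_pairs_char[OF k] ij by auto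
  show ?thesis
  proof (cases "\<forall>l<n. l \<noteq> i \<and> l \<noteq> j \<longrightarrow> c l = (k - 1) div 2")
    case True
    have d: "fr k n i 0 \<noteq> fr k n j 0" "fr k n j 0 \<noteq> fr k n i (k - 1)"
      "fr k n i (k - 1) \<noteq> fr k n j (k - 1)"
      using fr_eq_iff[OF k] ij z by auto
    have dq: "Qp k n i \<noteq> Qp k n j" using Qp_eq_iff[OF k] ij by auto
    have r: "restr_frame k n (move k n i j c) permutes frame k n"
      unfolding move_restr[OF k vm True]
      by (intro permutes_compose permutes_swap_id inF)
    have p: "pair_perm k n (move k n i j c) permutes frame_pairs k n"
      unfolding move_pair_perm[OF k vm] if_P[OF True]
      by (intro permutes_swap_id inP)
    have "sign (restr_frame k n (move k n i j c)) = -1"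
      unfolding move_restr[OF k vm True]
      by (simp only: sign_compose permutation_swap_id permutation_compose sign_swap_id
          if_not_P[OF d(1)] if_not_P[OF d(2)] if_not_P[OF d(3)])
    moreover have "sign (pair_perm k n (move k n i j c)) = -1"
      unfolding move_pair_perm[OF k vm] if_P[OF True] by (simp add: sign_swap_id dq)
    ultimately show ?thesis using r p by simp
  next
    case False
    show ?thesis unfolding move_restr_id[OF k vm False] move_pair_perm[OF k vm] if_not_P[OF False]
      by simp
  qed
qed

lemma restr_comp:
  assumes "g ` frame k n \<subseteq> frame k n"
  shows "restr_frame k n (h \<circ> g) = restr_frame k n h \<circ> restr_frame k n g"
proof
  fix p show "restr_frame k n (h \<circ> g) p = (restr_frame k n h \<circ> restr_frame k n g) p"
    using assms by (cases "p \<in> frame k n") (auto simp: restr_frame_def)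
qed

lemma pair_comp:
  assumes "\<forall>P \<in> frame_pairs k n. g ` P \<in> frame_pairs k n"
  shows "pair_perm k n (h \<circ> g) = pair_perm k n h \<circ> pair_perm k n g"
proof
  fix P show "pair_perm k n (h \<circ> g) P = (pair_perm k n h \<circ> pair_perm k n g) P"
    using assms by (cases "P \<in> frame_pairs k n") (simp_all add: pair_perm_def image_comp)
qed

lemma restr_image:
  assumes "restr_frame k n g permutes frame k n"
  shows "g ` frame k n = frame k n"
proof -
  have e: "g ` frame k n = restr_frame k n g ` frame k n"
    unfolding restr_frame_def by (rule image_cong) simp_all
  show ?thesis unfolding e by (rule permutes_image[OF assms])
qed

lemma pair_image:
  assumes "pair_perm k n g permutes frame_pairs k n" "P \<in> frame_pairs k n"
  shows "g ` P \<in> frame_pairs k n"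
proof -
  have "pair_perm k n g P \<in> frame_pairs k n"
    by (rule iffD2[OF permutes_in_image[OF assms(1)] assms(2)])
  moreover have "pair_perm k n g P = g ` P" using assms(2) unfolding pair_perm_def by (rule if_P)
  ultimately show ?thesis by metis
qed

lemma comb_inv:
  assumes k: "k \<ge> 2" "odd k" and "combination k n g"
  shows "restr_frame k n g permutes frame k n
    \<and> pair_perm k n g permutes frame_pairs k n
    \<and> sign (restr_frame k n g) * sign (pair_perm k n g) = 1"
  using assms(3)
proof (induction rule: combination.induct)
  case comb_id
  have r: "restr_frame k n id = id" by (auto simp: restr_frame_def)
  have p: "pair_perm k n id = id" by (auto simp: pair_perm_def fun_eq_iff)
  show ?case unfolding r p using permutes_id[of "frame k n"] permutes_id[of "frame_pairs k n"] by (simp add: id_def)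
next
  case (comb_step g i j c)
  let ?h = "move k n i j c"
  have hm: "restr_frame k n ?h permutes frame k n" "pair_perm k n ?h permutes frame_pairs k n"
    "sign (restr_frame k n ?h) * sign (pair_perm k n ?h) = 1"
    using move_inv[OF k comb_step(2)] by auto
  have gm: "restr_frame k n g permutes frame k n" "pair_perm k n g permutes frame_pairs k n"
    "sign (restr_frame k n g) * sign (pair_perm k n g) = 1"
    using comb_step(3) by auto
  have e1: "restr_frame k n (?h \<circ> g) = restr_frame k n ?h \<circ> restr_frame k n g"
    by (rule restr_comp) (simp add: restr_image[OF gm(1)])
  have e2: "pair_perm k n (?h \<circ> g) = pair_perm k n ?h \<circ> pair_perm k n g"
    by (rule pair_comp) (simp add: pair_image[OF gm(2)])
  have pf: "permutation (restr_frame k n ?h)" "permutation (restr_frame k n g)"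
    "permutation (pair_perm k n ?h)" "permutation (pair_perm k n g)"
    using hm gm finite_frame[OF k] finite_frame_pairs[OF k] permutation_permutes by blast+
  have sg: "sign (restr_frame k n (?h \<circ> g)) * sign (pair_perm k n (?h \<circ> g))
      = (sign (restr_frame k n ?h) * sign (pair_perm k n ?h)) * (sign (restr_frame k n g) * sign (pair_perm k n g))"
    unfolding e1 e2 sign_compose[OF pf(1,2)] sign_compose[OF pf(3,4)] by (simp add: algebra_simps)
  have s1: "sign (restr_frame k n ?h \<circ> restr_frame k n g) * sign (pair_perm k n ?h \<circ> pair_perm k n g) = 1"
    using sg hm(3) gm(3) unfolding e1 e2 by (simp only: mult_1)
  show ?case unfolding e1 e2
    by (intro conjI permutes_compose[OF gm(1) hm(1)] permutes_compose[OF gm(2) hm(2)] s1)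
qed

theorem mainTheorem9:
  fixes k n :: nat and g :: "(nat \<Rightarrow> nat) \<Rightarrow> (nat \<Rightarrow> nat)"
  assumes "k \<ge> 2" and "n \<ge> 3" and "odd k"
    and "combination k n g"
  shows "g ` frame k n = frame k n
    \<and> (\<forall>P \<in> frame_pairs k n. g ` P \<in> frame_pairs k n)
    \<and> sign (restr_frame k n g) * sign (pair_perm k n g) = 1"
  using comb_inv[OF assms(1,3,4)] restr_image pair_image by blast

end
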